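(* (i) $S^t=\exp(t\log S)=\sum_{m\geq 0}\frac{t^m}{m!}(\log S)^m$ as operators on $\mathfrak{h}^1[t]$ (the series being finite on each word). (ii) $S^{t_1+t_2}=S^{t_1}\circ S^{t_2}$ as operators on $\mathfrak{h}^1[t_1,t_2]$, for independent indeterminates $t_1,t_2$; in particular $S^{-t}$ is the inverse of $S^t$. (iii) For every word $w$ of length $n$, \[\frac{d}{dt}S^t(w)=(S^t\circ\log S)(w)=\sum_{r\in R_n,\ \sigma(r)=1}S^t(\mathrm{Con}_r(w)).\]
   Context: Let $\mathfrak{A}$ be a commutative $\mathbb{Q}$-algebra, $A$ a set of letters, and $\mathfrak{h}^1$ the non-commutative polynomial algebra over $\mathfrak{A}$ in the letters of $A$ (the free $\mathfrak{A}$-module on words, i.e. finite sequences of letters including the empty word $1$, with concatenation product). Let $\mathfrak{z}\subset\mathfrak{h}^1$ be the $\mathfrak{A}$-submodule spanned by $A$, and assume $\mathfrak{z}$ carries a commutative associative (not necessarily unital) $\mathfrak{A}$-bilinear product $\circ\colon\mathfrak{z}\times\mathfrak{z}\to\mathfrak{z}$. This is extended to an action of $\mathfrak{z}$ on $\mathfrak{h}^1$ by $a\circ 1=0$ and $a\circ(bw)=(a\circ b)w$ for $a,b\in A$ and words $w$, extended $\mathfrak{A}$-bilinearly. Let $t$ be an indeterminate, $\mathfrak{h}^1[t]=\mathfrak{h}^1\otimes_{\mathbb{Q}}\mathbb{Q}[t]$, with all structures extended $\mathfrak{A}[t]$-linearly. Define the $\mathfrak{A}[t]$-linear operator $S^t$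 on $\mathfrak{h}^1[t]$ by $S^t(1)=1$ and $S^t(aw)=aS^t(w)+t\,a\circ S^t(w)$ for $a\in A$ and words $w$; for an element $\alpha$ of a commutative $\mathfrak{A}$-algebra (e.g. $1$, $-t$, $t_1$, $t_1+t_2$), $S^\alpha$ denotes the operator obtained by substituting $\alpha$ for $t$, and $S=S^1$. $\log S=\sum_{k\geq1}\frac{(-1)^{k-1}}{k}(S-1)^k$ (finite on each word). For $n\geq 0$, let $R_n$ be the set of strictly increasing sequences $r=(r_0,\ldots,r_s)$ of integers in $\{0,\ldots,n\}$ with $r_0=0$, $r_s=n$; put $\sigma(r)=n-s$. For a word $w=a_1\cdots a_n$, $\mathrm{Con}_r(w)=b_1\cdots b_s$ with $b_i=a_{r_{i-1}+1}\circ\cdots\circ a_{r_i}$. *)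

theory Defs
  imports "HOL-Library.Poly_Mapping" "HOL-Computational_Algebra.Polynomial"
begin

text \<open>
  Elements of the non-commutative polynomial algebra over a coefficient ring 'c in the
  letters of type 'l are finitely supported functions from words ('l list) to 'c.
  The submodule z spanned by the letters is represented by finitely supported functions
  'l \<Rightarrow>0 'c.  A product on z is given by its values on pairs of letters (a function
  'l \<Rightarrow> 'l \<Rightarrow> ('l \<Rightarrow>0 'c)) and extended bilinearly.
\<close>

definition smul :: "'c::comm_ring_1 \<Rightarrow> ('a \<Rightarrow>\<^sub>0 'c) \<Rightarrow> ('a \<Rightarrow>\<^sub>0 'c)" where
  "smul c x = Poly_Mapping.map (\<lambda>v. c * v) x"

definition lin_ext :: "('a \<Rightarrow> ('b \<Rightarrow>\<^sub>0 'c::comm_ring_1)) \<Rightarrow> ('a \<Rightarrow>\<^sub>0 'c) \<Rightarrow> ('b \<Rightarrow>\<^sub>0 'c)" where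
  "lin_ext f x = (\<Sum>v\<in>Poly_Mapping.keys x. smul (Poly_Mapping.lookup x v) (f v))"

definition wd :: "'l list \<Rightarrow> ('l list \<Rightarrow>\<^sub>0 'c::comm_ring_1)" where
  "wd w = Poly_Mapping.single w 1"

definition zmult :: "('l \<Rightarrow> 'l \<Rightarrow> ('l \<Rightarrow>\<^sub>0 'c::comm_ring_1)) \<Rightarrow> ('l \<Rightarrow>\<^sub>0 'c) \<Rightarrow> ('l \<Rightarrow>\<^sub>0 'c) \<Rightarrow> ('l \<Rightarrow>\<^sub>0 'c)" where
  "zmult m x y = lin_ext (\<lambda>a. lin_ext (\<lambda>b. m a b) y) x"

definition prepend :: "'l \<Rightarrow> ('l list \<Rightarrow>\<^sub>0 'c::comm_ring_1) \<Rightarrow> ('l list \<Rightarrow>\<^sub>0 'c)" where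
  "prepend a x = lin_ext (\<lambda>u. wd (a # u)) x"

definition act :: "('l \<Rightarrow> 'l \<Rightarrow> ('l \<Rightarrow>\<^sub>0 'c::comm_ring_1)) \<Rightarrow> 'l \<Rightarrow> ('l list \<Rightarrow>\<^sub>0 'c) \<Rightarrow> ('l list \<Rightarrow>\<^sub>0 'c)" where
  "act m a x = lin_ext (\<lambda>u. case u of [] \<Rightarrow> 0 | b # v \<Rightarrow> lin_ext (\<lambda>c. wd (c # v)) (m a b)) x"

fun Sw :: "('l \<Rightarrow> 'l \<Rightarrow> ('l \<Rightarrow>\<^sub>0 'c::comm_ring_1)) \<Rightarrow> 'c \<Rightarrow> 'l list \<Rightarrow> ('l list \<Rightarrow>\<^sub>0 'c)" where
  "Sw m \<alpha> [] = wd []"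
| "Sw m \<alpha> (a # w) = prepend a (Sw m \<alpha> w) + smul \<alpha> (act m a (Sw m \<alpha> w))"

definition Sop :: "('l \<Rightarrow> 'l \<Rightarrow> ('l \<Rightarrow>\<^sub>0 'c::comm_ring_1)) \<Rightarrow> 'c \<Rightarrow> ('l list \<Rightarrow>\<^sub>0 'c) \<Rightarrow> ('l list \<Rightarrow>\<^sub>0 'c)" where
  "Sop m \<alpha> = lin_ext (Sw m \<alpha>)"

definition qinv :: "nat \<Rightarrow> 'c::comm_ring_1" where
  "qinv k = (THE u. of_nat k * u = 1)"

text \<open>log S = sum_{k>=1} (-1)^(k-1)/k (S - 1)^k; on a word w the terms with k > length w
  vanish, so the series is evaluated on w as the finite sum over k = 1..length w\<close>
definition logS :: "('l \<Rightarrow> 'l \<Rightarrow> ('l \<Rightarrow>\<^sub>0 'c::comm_ring_1)) \<Rightarrow> ('l list \<Rightarrow>\<^sub>0 'c) \<Rightarrow> ('l list \<Rightarrow>\<^sub>0 'c)" where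
  "logS m = lin_ext (\<lambda>w. \<Sum>k\<in>{1..length w}.
      smul ((-1) ^ (k - 1) * qinv k) (((\<lambda>x. Sop m 1 x - x) ^^ k) (wd w)))"

text \<open>exp(alpha log S) = sum_{j>=0} alpha^j/j! (log S)^j; on a word w the terms with
  j > length w vanish, so the series is evaluated on w as the finite sum over j = 0..length w\<close>
definition expLogS :: "('l \<Rightarrow> 'l \<Rightarrow> ('l \<Rightarrow>\<^sub>0 'c::comm_ring_1)) \<Rightarrow> 'c \<Rightarrow> ('l list \<Rightarrow>\<^sub>0 'c) \<Rightarrow> ('l list \<Rightarrow>\<^sub>0 'c)" where
  "expLogS m \<alpha> = lin_ext (\<lambda>w. \<Sum>j\<in>{0..length w}.
      smul (\<alpha> ^ j * qinv (fact j)) ((logS m ^^ j) (wd w)))"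

text \<open>extension of scalars along a coefficient map (e.g. A \<rightarrow> A[t])\<close>
definition coeff_map :: "('c::zero \<Rightarrow> 'd::zero) \<Rightarrow> ('a \<Rightarrow>\<^sub>0 'c) \<Rightarrow> ('a \<Rightarrow>\<^sub>0 'd)" where
  "coeff_map f x = Poly_Mapping.map f x"

text \<open>the product on letters with coefficients in A[t], resp. A[t1][t2] = A[t1,t2]\<close>
definition mult_t :: "('l \<Rightarrow> 'l \<Rightarrow> ('l \<Rightarrow>\<^sub>0 'r::comm_ring_1)) \<Rightarrow> 'l \<Rightarrow> 'l \<Rightarrow> ('l \<Rightarrow>\<^sub>0 'r poly)" where
  "mult_t m a b = coeff_map (\<lambda>c. [:c:]) (m a b)"

definition mult_tt :: "('l \<Rightarrow> 'l \<Rightarrow> ('l \<Rightarrow>\<^sub>0 'r::comm_ring_1)) \<Rightarrow> 'l \<Rightarrow> 'l \<Rightarrow> ('l \<Rightarrow>\<^sub>0 'r poly poly)" where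
  "mult_tt m a b = coeff_map (\<lambda>c. [:[:c:]:]) (m a b)"

text \<open>formal derivative d/dt on A[t] (pderiv in the library needs no zero divisors)\<close>
definition dt :: "'r::comm_ring_1 poly \<Rightarrow> 'r poly" where
  "dt p = (\<Sum>i\<le>degree p. monom (of_nat i * coeff p i) (i - 1))"

definition Rseq :: "nat \<Rightarrow> nat list set" where
  "Rseq n = {r. r \<noteq> [] \<and> sorted_wrt (<) r \<and> set r \<subseteq> {0..n} \<and> hd r = 0 \<and> last r = n}"

definition sigma :: "nat \<Rightarrow> nat list \<Rightarrow> nat" where
  "sigma n r = n - (length r - 1)"

fun zprod :: "('l \<Rightarrow> 'l \<Rightarrow> ('l \<Rightarrow>\<^sub>0 'c::comm_ring_1)) \<Rightarrow> 'l list \<Rightarrow> ('l \<Rightarrow>\<^sub>0 'c)" where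
  "zprod m [] = 0"
| "zprod m [a] = Poly_Mapping.single a 1"
| "zprod m (a # b # w) = zmult m (Poly_Mapping.single a 1) (zprod m (b # w))"

fun wprod :: "('l \<Rightarrow>\<^sub>0 'c::comm_ring_1) list \<Rightarrow> ('l list \<Rightarrow>\<^sub>0 'c)" where
  "wprod [] = wd []"
| "wprod (b # bs) = lin_ext (\<lambda>c. prepend c (wprod bs)) b"

text \<open>Con_r(w) = b_1 ... b_s with b_i = a_{r_{i-1}+1} \<circ> ... \<circ> a_{r_i}\<close>
definition Con :: "('l \<Rightarrow> 'l \<Rightarrow> ('l \<Rightarrow>\<^sub>0 'c::comm_ring_1)) \<Rightarrow> nat list \<Rightarrow> 'l list \<Rightarrow> ('l list \<Rightarrow>\<^sub>0 'c)" where
  "Con m r w = wprod (map (\<lambda>i. zprod m (take (r ! (i + 1) - r ! i) (drop (r ! i) w)))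
                          [0..<length r - 1])"

end

theory Submission
  imports Defs "HOL-Computational_Algebra.Formal_Power_Series"
begin

lemma lookup_smul [simp]: "Poly_Mapping.lookup (smul c x) v = c * Poly_Mapping.lookup x v"
  by (simp add: smul_def Poly_Mapping.map.rep_eq when_def)

lemma smul_add: "smul c (x + y) = smul c x + smul c y"
  by (rule poly_mapping_eqI) (simp add: lookup_add algebra_simps)
lemma smul_add_left: "smul (c + d) x = smul c x + smul d x"
  by (rule poly_mapping_eqI) (simp add: lookup_add algebra_simps)
lemma smul_smul: "smul c (smul d x) = smul (c * d) x"
  by (rule poly_mapping_eqI) (simp add: algebra_simps)
lemma smul_one [simp]: "smul 1 x = x"
  by (rule poly_mapping_eqI) simp
lemma smul_zero_left [simp]: "smul 0 x = 0"
  by (rule poly_mapping_eqI) simp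
lemma smul_zero [simp]: "smul c 0 = 0"
  by (rule poly_mapping_eqI) simp
lemma smul_diff: "smul c (x - y) = smul c x - smul c y"
  by (rule poly_mapping_eqI) (simp add: lookup_minus algebra_simps)
lemma smul_sum: "smul c (sum f A) = (\<Sum>a\<in>A. smul c (f a))"
  by (induction A rule: infinite_finite_induct) (auto simp: smul_add)
lemma sum_smul_left: "smul (sum f A) x = (\<Sum>a\<in>A. smul (f a) x)"
  by (induction A rule: infinite_finite_induct) (auto simp: smul_add_left)
lemma keys_smul: "Poly_Mapping.keys (smul c x) \<subseteq> Poly_Mapping.keys x"
  by (auto simp: in_keys_iff)

lemma lin_ext_superset:
  assumes "finite A" "Poly_Mapping.keys x \<subseteq> A"
  shows "lin_ext f x = (\<Sum>v\<in>A. smul (Poly_Mapping.lookup x v) (f v))"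
  unfolding lin_ext_def
  by (rule sum.mono_neutral_left) (use assms in \<open>auto simp: in_keys_iff\<close>)

lemma lin_ext_add: "lin_ext f (x + y) = lin_ext f x + lin_ext f y"
proof -
  let ?A = "Poly_Mapping.keys x \<union> Poly_Mapping.keys y"
  have k: "Poly_Mapping.keys (x+y) \<subseteq> ?A" by (rule keys_add)
  show ?thesis
    by (simp add: lin_ext_superset[OF _ k] lin_ext_superset[of ?A x] lin_ext_superset[of ?A y]
        lookup_add smul_add_left sum.distrib)
qed

lemma lin_ext_smul: "lin_ext f (smul c x) = smul c (lin_ext f x)"
  by (simp add: lin_ext_superset[OF _ keys_smul] lin_ext_def[of f x] smul_sum smul_smul)

lemma lin_ext_zero [simp]: "lin_ext f 0 = 0"
  by (simp add: lin_ext_def)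

lemma lin_ext_single [simp]: "lin_ext f (Poly_Mapping.single v c) = smul c (f v)"
  by (subst lin_ext_superset[of "{v}"]) auto

lemma lin_ext_wd [simp]: "lin_ext f (wd v) = f v"
  by (simp add: wd_def)

lemma lin_ext_cong: "(\<And>v. v \<in> Poly_Mapping.keys x \<Longrightarrow> f v = g v) \<Longrightarrow> lin_ext f x = lin_ext g x"
  by (simp add: lin_ext_def)

lemma lin_ext_fadd: "lin_ext (\<lambda>v. f v + g v) x = lin_ext f x + lin_ext g x"
  by (simp add: lin_ext_def smul_add sum.distrib)

lemma lin_ext_fsmul: "lin_ext (\<lambda>v. smul c (f v)) x = smul c (lin_ext f x)"
  by (simp add: lin_ext_def smul_sum smul_smul mult.commute)

lemma lin_ext_fzero [simp]: "lin_ext (\<lambda>v. 0) x = 0"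
  by (simp add: lin_ext_def)

lemma lin_ext_fsum: "lin_ext (\<lambda>v. \<Sum>i\<in>I. f i v) x = (\<Sum>i\<in>I. lin_ext (f i) x)"
  by (induction I rule: infinite_finite_induct) (auto simp: lin_ext_fadd)

definition linear_op :: "(('a \<Rightarrow>\<^sub>0 'c::comm_ring_1) \<Rightarrow> ('b \<Rightarrow>\<^sub>0 'c)) \<Rightarrow> bool" where
  "linear_op L \<longleftrightarrow> (\<forall>x y. L (x + y) = L x + L y) \<and> (\<forall>c x. L (smul c x) = smul c (L x))"

lemma linear_lin_ext [simp, intro]: "linear_op (lin_ext f)"
  by (simp add: linear_op_def lin_ext_add lin_ext_smul)

lemma linD_add: "linear_op L \<Longrightarrow> L (x + y) = L x + L y"
  by (simp add: linear_op_def)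
lemma linD_smul: "linear_op L \<Longrightarrow> L (smul c x) = smul c (L x)"
  by (simp add: linear_op_def)
lemma linD_zero: "linear_op L \<Longrightarrow> L 0 = 0"
  by (metis linD_smul smul_zero_left)
lemma linD_sum: "linear_op L \<Longrightarrow> L (sum f A) = (\<Sum>a\<in>A. L (f a))"
  by (induction A rule: infinite_finite_induct) (auto simp: linD_zero linD_add)
lemma linD_uminus: "linear_op L \<Longrightarrow> L (- x) = - L x"
proof -
  assume L: "linear_op L"
  have "L x + L (- x) = 0" using linD_add[OF L, of x "- x"] linD_zero[OF L] by simp
  thus ?thesis by (simp add: eq_neg_iff_add_eq_0 add.commute)
qed
lemma linD_diff: "linear_op L \<Longrightarrow> L (x - y) = L x - L y"
  using linD_add[of L x "- y"] linD_uminus[of L y] by simp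

lemma lin_ext_comp: "linear_op L \<Longrightarrow> L (lin_ext f x) = lin_ext (\<lambda>v. L (f v)) x"
  by (simp add: lin_ext_def linD_sum linD_smul)

lemma lin_ext_wd_id: "lin_ext wd x = x"
proof (rule poly_mapping_eqI)
  fix u
  have "Poly_Mapping.lookup (lin_ext wd x) u = (\<Sum>v\<in>Poly_Mapping.keys x. Poly_Mapping.lookup x v * (1 when v = u))"
    by (simp add: lin_ext_def lookup_sum wd_def lookup_single)
  also have "\<dots> = (\<Sum>v\<in>Poly_Mapping.keys x. if v = u then Poly_Mapping.lookup x v else 0)"
    by (rule sum.cong) (auto simp: when_def)
  also have "\<dots> = Poly_Mapping.lookup x u"
    by (simp add: sum.delta' in_keys_iff)
  finally show "Poly_Mapping.lookup (lin_ext wd x) u = Poly_Mapping.lookup x u" .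
qed

lemma lin_expand: "linear_op L \<Longrightarrow> L x = lin_ext (\<lambda>v. L (wd v)) x"
proof -
  assume L: "linear_op L"
  have "L (lin_ext wd x) = lin_ext (\<lambda>v. L (wd v)) x" by (rule lin_ext_comp[OF L])
  thus ?thesis by (simp add: lin_ext_wd_id)
qed

lemma lin_eq: "linear_op LA \<Longrightarrow> linear_op LB \<Longrightarrow> (\<And>v. LA (wd v) = LB (wd v)) \<Longrightarrow> LA x = LB x"
  using lin_expand[of LA x] lin_expand[of LB x] by simp

lemma linear_compose: "linear_op LA \<Longrightarrow> linear_op LB \<Longrightarrow> linear_op (\<lambda>x. LA (LB x))"
  by (simp add: linear_op_def)
lemma linear_plus: "linear_op LA \<Longrightarrow> linear_op LB \<Longrightarrow> linear_op (\<lambda>x. LA x + LB x)"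
  by (simp add: linear_op_def smul_add)
lemma linear_minus: "linear_op LA \<Longrightarrow> linear_op LB \<Longrightarrow> linear_op (\<lambda>x. LA x - LB x)"
  by (simp add: linear_op_def smul_diff)
lemma linear_sc: "linear_op L \<Longrightarrow> linear_op (\<lambda>x. smul c (L x))"
  by (simp add: linear_op_def smul_add smul_smul mult.commute)
lemma linear_id [intro, simp]: "linear_op (\<lambda>x. x)"
  by (simp add: linear_op_def)
lemma linear_zero_op [intro, simp]: "linear_op (\<lambda>x. 0)"
  by (simp add: linear_op_def)
lemma linear_funpow [intro]: fixes L :: "('a \<Rightarrow>\<^sub>0 'c::comm_ring_1) \<Rightarrow> ('a \<Rightarrow>\<^sub>0 'c)" shows "linear_op L \<Longrightarrow> linear_op (L ^^ k)"
proof (induction k)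
  case 0 then show ?case by (simp add: linear_op_def funpow_0)
next
  case (Suc k)
  have "linear_op (\<lambda>x. L ((L ^^ k) x))" by (rule linear_compose[OF Suc.prems Suc.IH[OF Suc.prems]])
  then show ?case by (simp add: comp_def)
qed
lemma linear_sum_op: "(\<And>i. linear_op (L i)) \<Longrightarrow> linear_op (\<lambda>x. \<Sum>i\<in>I. L i x)"
  unfolding linear_op_def by (simp add: sum.distrib smul_sum linD_add linD_smul)
lemma linear_fam: "(\<And>c. linear_op (L c)) \<Longrightarrow> linear_op (\<lambda>x. lin_ext (\<lambda>c. L c x) z)"
proof -
  assume L: "\<And>c. linear_op (L c)"
  show ?thesis unfolding linear_op_def
  proof (intro conjI allI)
    fix x y show "lin_ext (\<lambda>c. L c (x + y)) z = lin_ext (\<lambda>c. L c x) z + lin_ext (\<lambda>c. L c y) z"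
      by (simp add: linD_add[OF L] lin_ext_fadd)
  next
    fix d x show "lin_ext (\<lambda>c. L c (smul d x)) z = smul d (lin_ext (\<lambda>c. L c x) z)"
      by (simp add: linD_smul[OF L] lin_ext_fsmul)
  qed
qed


definition liftw :: "'l list \<Rightarrow> ('l \<Rightarrow>\<^sub>0 'c::comm_ring_1) \<Rightarrow> ('l list \<Rightarrow>\<^sub>0 'c)" where
  "liftw u z = lin_ext (\<lambda>c. wd (c # u)) z"

definition zpre :: "('l \<Rightarrow>\<^sub>0 'c::comm_ring_1) \<Rightarrow> ('l list \<Rightarrow>\<^sub>0 'c) \<Rightarrow> ('l list \<Rightarrow>\<^sub>0 'c)" where
  "zpre z y = lin_ext (\<lambda>c. prepend c y) z"

definition lassoc :: "('l \<Rightarrow> 'l \<Rightarrow> ('l \<Rightarrow>\<^sub>0 'c::comm_ring_1)) \<Rightarrow> bool" where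
  "lassoc m \<longleftrightarrow> (\<forall>a b d. zmult m (m a b) (Poly_Mapping.single d 1) = zmult m (Poly_Mapping.single a 1) (m b d))"

lemma prepend_eq: "prepend a = lin_ext (\<lambda>u. wd (a # u))"
  by (rule ext) (simp add: prepend_def)
lemma linear_prepend [simp, intro]: "linear_op (prepend a)"
  by (simp add: prepend_eq)
lemma prepend_wd [simp]: "prepend a (wd u) = wd (a # u)"
  by (simp add: prepend_def)

lemma act_eq: "act m a = lin_ext (\<lambda>u. case u of [] \<Rightarrow> 0 | b # v \<Rightarrow> lin_ext (\<lambda>c. wd (c # v)) (m a b))"
  by (rule ext) (simp add: act_def)
lemma linear_act [simp, intro]: "linear_op (act m a)"
  by (simp add: act_eq)
lemma act_nil [simp]: "act m a (wd []) = 0"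
  by (simp add: act_def)
lemma act_cons [simp]: "act m a (wd (b # v)) = liftw v (m a b)"
  by (simp add: act_def liftw_def)

lemma linear_liftw [simp, intro]: "linear_op (liftw u)"
proof -
  have e: "liftw u = lin_ext (\<lambda>c. wd (c # u))" by (rule ext) (simp add: liftw_def)
  show ?thesis unfolding e by (rule linear_lin_ext)
qed

lemma Sop_eq: "Sop m \<alpha> = lin_ext (Sw m \<alpha>)"
  by (simp add: Sop_def)
lemma linear_Sop [simp, intro]: "linear_op (Sop m \<alpha>)"
  by (simp add: Sop_eq)
lemma Sop_wd [simp]: "Sop m \<alpha> (wd w) = Sw m \<alpha> w"
  by (simp add: Sop_eq)

lemma linear_zpre [simp, intro]: "linear_op (zpre z)"
proof -
  have "zpre z = (\<lambda>y. lin_ext (\<lambda>c. prepend c y) z)" by (rule ext) (simp add: zpre_def)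
  thus ?thesis using linear_fam[of "\<lambda>c. prepend c" z] by simp
qed

lemma lin_comp2: "linear_op LA \<Longrightarrow> linear_op LB \<Longrightarrow> linear_op (\<lambda>x. LA (LB x))"
  by (rule linear_compose)

lemma act_prepend: "act m a (prepend b y) = zpre (m a b) y"
proof -
  have l: "linear_op (\<lambda>y. act m a (prepend b y))" by (rule lin_comp2) simp_all
  show ?thesis by (rule lin_eq[OF l linear_zpre]) (simp add: zpre_def liftw_def)
qed

lemma zmult_single_left: "zmult m (Poly_Mapping.single a 1) y = lin_ext (m a) y"
  by (simp add: zmult_def)
lemma zmult_single_right: "zmult m x (Poly_Mapping.single d 1) = lin_ext (\<lambda>c. m c d) x"
  by (simp add: zmult_def)

lemma act_act:
  assumes la: "lassoc m"
  shows "act m a (act m b y) = lin_ext (\<lambda>c. act m c y) (m a b)"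
proof -
  have l1: "linear_op (\<lambda>y. act m a (act m b y))" by (rule lin_comp2) simp_all
  have l2: "linear_op (\<lambda>y. lin_ext (\<lambda>c. act m c y) (m a b))" by (rule linear_fam) simp
  show ?thesis
  proof (rule lin_eq[OF l1 l2])
    fix u
    show "act m a (act m b (wd u)) = lin_ext (\<lambda>c. act m c (wd u)) (m a b)"
    proof (cases u)
      case Nil
      then show ?thesis by (simp add: linD_zero)
    next
      case (Cons d v)
      have "act m a (act m b (wd u)) = act m a (lin_ext (\<lambda>e. wd (e # v)) (m b d))"
        by (simp add: Cons liftw_def)
      also have "\<dots> = lin_ext (\<lambda>e. liftw v (m a e)) (m b d)"
        by (simp add: lin_ext_comp)
      also have "\<dots> = liftw v (lin_ext (m a) (m b d))"
        by (simp add: lin_ext_comp)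
      also have "\<dots> = liftw v (lin_ext (\<lambda>c. m c d) (m a b))"
        using la unfolding lassoc_def by (metis zmult_single_left zmult_single_right)
      also have "\<dots> = lin_ext (\<lambda>c. act m c (wd u)) (m a b)"
        by (simp add: lin_ext_comp Cons)
      finally show ?thesis .
    qed
  qed
qed

lemma S_prepend: "Sop m \<alpha> (prepend a x) = prepend a (Sop m \<alpha> x) + smul \<alpha> (act m a (Sop m \<alpha> x))"
proof -
  have l1: "linear_op (\<lambda>x. Sop m \<alpha> (prepend a x))" by (rule lin_comp2) simp_all
  have l2: "linear_op (\<lambda>x. prepend a (Sop m \<alpha> x) + smul \<alpha> (act m a (Sop m \<alpha> x)))"
    by (rule linear_plus[OF lin_comp2[OF linear_prepend linear_Sop] linear_sc[OF lin_comp2[OF linear_act linear_Sop]]])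
  show ?thesis by (rule lin_eq[OF l1 l2]) simp
qed

lemma S_act:
  assumes la: "lassoc m"
  shows "Sop m \<alpha> (act m a y) = act m a (Sop m \<alpha> y)"
proof -
  have l1: "linear_op (\<lambda>y. Sop m \<alpha> (act m a y))" by (rule lin_comp2) simp_all
  have l2: "linear_op (\<lambda>y. act m a (Sop m \<alpha> y))" by (rule lin_comp2) simp_all
  show ?thesis
  proof (rule lin_eq[OF l1 l2])
    fix u
    show "Sop m \<alpha> (act m a (wd u)) = act m a (Sop m \<alpha> (wd u))"
    proof (cases u)
      case Nil
      then show ?thesis by (simp add: linD_zero)
    next
      case (Cons b v)
      have "Sop m \<alpha> (act m a (wd u)) = lin_ext (\<lambda>c. Sw m \<alpha> (c # v)) (m a b)"
        by (simp add: Cons liftw_def lin_ext_comp)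
      also have "\<dots> = zpre (m a b) (Sw m \<alpha> v) + smul \<alpha> (lin_ext (\<lambda>c. act m c (Sw m \<alpha> v)) (m a b))"
        by (simp add: lin_ext_fadd lin_ext_fsmul zpre_def)
      also have "\<dots> = act m a (Sop m \<alpha> (wd u))"
        by (simp add: Cons linD_add linD_smul act_prepend act_act[OF la])
      finally show ?thesis .
    qed
  qed
qed

lemma S_add:
  assumes la: "lassoc m"
  shows "Sop m \<alpha> (Sop m \<beta> x) = Sop m (\<alpha> + \<beta>) x"
proof -
  have l1: "linear_op (\<lambda>x. Sop m \<alpha> (Sop m \<beta> x))" by (rule lin_comp2) simp_all
  show ?thesis
  proof (rule lin_eq[OF l1 linear_Sop])
    fix w
    show "Sop m \<alpha> (Sop m \<beta> (wd w)) = Sop m (\<alpha> + \<beta>) (wd w)"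
    proof (induction w)
      case Nil then show ?case by simp
    next
      case (Cons a w)
      have "Sop m \<alpha> (Sop m \<beta> (wd (a # w)))
          = Sop m \<alpha> (prepend a (Sw m \<beta> w)) + smul \<beta> (Sop m \<alpha> (act m a (Sw m \<beta> w)))"
        by (simp add: linD_add linD_smul)
      also have "\<dots> = prepend a (Sw m (\<alpha>+\<beta>) w) + smul (\<alpha>+\<beta>) (act m a (Sw m (\<alpha>+\<beta>) w))"
        using Cons by (simp add: S_prepend S_act[OF la] smul_add_left add.assoc)
      finally show ?case by simp
    qed
  qed
qed

lemma S_zero: "Sop m 0 x = x"
proof (rule lin_eq[OF linear_Sop linear_id])
  fix w show "Sop m 0 (wd w) = wd w"
    by (induction w) simp_all
qed


section \<open>The operator C1 and the exponential formula\<close>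

fun C1w :: "('l \<Rightarrow> 'l \<Rightarrow> ('l \<Rightarrow>\<^sub>0 'c::comm_ring_1)) \<Rightarrow> 'l list \<Rightarrow> ('l list \<Rightarrow>\<^sub>0 'c)" where
  "C1w m [] = 0"
| "C1w m (a # w) = prepend a (C1w m w) + act m a (wd w)"

definition C1 :: "('l \<Rightarrow> 'l \<Rightarrow> ('l \<Rightarrow>\<^sub>0 'c::comm_ring_1)) \<Rightarrow> ('l list \<Rightarrow>\<^sub>0 'c) \<Rightarrow> ('l list \<Rightarrow>\<^sub>0 'c)" where
  "C1 m = lin_ext (C1w m)"

lemma linear_C1 [simp, intro]: "linear_op (C1 m)"
  by (simp add: C1_def)
lemma C1_wd [simp]: "C1 m (wd w) = C1w m w"
  by (simp add: C1_def)

lemma C1_prepend: "C1 m (prepend a x) = prepend a (C1 m x) + act m a x"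
proof -
  have l1: "linear_op (\<lambda>x. C1 m (prepend a x))" by (rule lin_comp2) simp_all
  have l2: "linear_op (\<lambda>x. prepend a (C1 m x) + act m a x)"
    by (rule linear_plus[OF lin_comp2[OF linear_prepend linear_C1] linear_act])
  show ?thesis by (rule lin_eq[OF l1 l2]) simp
qed

lemma C1_act:
  assumes la: "lassoc m"
  shows "C1 m (act m a y) = act m a (C1 m y)"
proof -
  have l1: "linear_op (\<lambda>y. C1 m (act m a y))" by (rule lin_comp2) simp_all
  have l2: "linear_op (\<lambda>y. act m a (C1 m y))" by (rule lin_comp2) simp_all
  show ?thesis
  proof (rule lin_eq[OF l1 l2])
    fix u
    show "C1 m (act m a (wd u)) = act m a (C1 m (wd u))"
    proof (cases u)
      case Nil
      then show ?thesis by (simp add: linD_zero)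
    next
      case (Cons b v)
      have "C1 m (act m a (wd u)) = lin_ext (\<lambda>c. C1w m (c # v)) (m a b)"
        by (simp add: Cons liftw_def lin_ext_comp)
      also have "\<dots> = zpre (m a b) (C1w m v) + lin_ext (\<lambda>c. act m c (wd v)) (m a b)"
        by (simp add: lin_ext_fadd zpre_def)
      also have "\<dots> = act m a (C1 m (wd u))"
        by (simp add: Cons linD_add act_prepend act_act[OF la])
      finally show ?thesis .
    qed
  qed
qed

lemma C1pow_act:
  assumes la: "lassoc m"
  shows "(C1 m ^^ j) (act m a y) = act m a ((C1 m ^^ j) y)"
  by (induction j) (simp_all add: C1_act[OF la])

lemma smul_of_nat_Suc: "smul (of_nat (Suc n)) y = y + smul (of_nat n) y"
  by (simp add: smul_add_left)

lemma C1pow_prepend: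
  assumes la: "lassoc m"
  shows "(C1 m ^^ Suc j) (prepend a x) = prepend a ((C1 m ^^ Suc j) x) + smul (of_nat (Suc j)) (act m a ((C1 m ^^ j) x))"
proof (induction j)
  case 0 then show ?case by (simp add: C1_prepend)
next
  case (Suc j)
  have "(C1 m ^^ Suc (Suc j)) (prepend a x) = C1 m ((C1 m ^^ Suc j) (prepend a x))" by simp
  also have "\<dots> = C1 m (prepend a ((C1 m ^^ Suc j) x) + smul (of_nat (Suc j)) (act m a ((C1 m ^^ j) x)))"
    by (simp only: Suc)
  also have "\<dots> = prepend a ((C1 m ^^ Suc (Suc j)) x) + act m a ((C1 m ^^ Suc j) x)
       + smul (of_nat (Suc j)) (act m a ((C1 m ^^ Suc j) x))"
    by (simp add: linD_add[OF linear_C1] linD_smul[OF linear_C1] C1_prepend C1_act[OF la])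
  also have "\<dots> = prepend a ((C1 m ^^ Suc (Suc j)) x) + smul (of_nat (Suc (Suc j))) (act m a ((C1 m ^^ Suc j) x))"
    by (simp only: smul_of_nat_Suc[of "Suc j"] add.assoc)
  finally show ?case .
qed

definition blt :: "nat \<Rightarrow> ('l list \<Rightarrow>\<^sub>0 'c::zero) \<Rightarrow> bool" where
  "blt k y \<longleftrightarrow> (\<forall>u\<in>Poly_Mapping.keys y. length u < k)"

lemma blt_add: "blt k x \<Longrightarrow> blt k y \<Longrightarrow> blt k (x + y)"
  using keys_add[of x y] by (auto simp: blt_def)
lemma blt_smul: "blt k x \<Longrightarrow> blt k (smul c x)"
  using keys_smul[of c x] by (auto simp: blt_def)
lemma blt_zero [simp]: "blt k 0"
  by (simp add: blt_def)
lemma blt_sum: "(\<And>i. i \<in> I \<Longrightarrow> blt k (f i)) \<Longrightarrow> blt k (sum f I)"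
  by (induction I rule: infinite_finite_induct) (auto intro: blt_add)
lemma blt_lin_ext: "(\<And>v. v \<in> Poly_Mapping.keys x \<Longrightarrow> blt k (f v)) \<Longrightarrow> blt k (lin_ext f x)"
  unfolding lin_ext_def by (rule blt_sum) (auto intro: blt_smul)
lemma blt_wd: "length u < k \<Longrightarrow> blt k (wd u)"
  by (simp add: blt_def wd_def)
lemma blt_mono: "blt k y \<Longrightarrow> k \<le> k' \<Longrightarrow> blt k' y"
  by (auto simp: blt_def)
lemma keys_wd [simp]: "Poly_Mapping.keys (wd u :: 'l list \<Rightarrow>\<^sub>0 'c::comm_ring_1) = {u}"
  by (simp add: wd_def)
lemma blt_prepend: "blt k y \<Longrightarrow> blt (Suc k) (prepend a y)"
  unfolding prepend_def by (rule blt_lin_ext) (auto simp: blt_def intro!: blt_wd)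
lemma blt_act: "blt (Suc (length w)) (act m a (wd w))"
  by (cases w) (auto simp: liftw_def intro!: blt_lin_ext blt_wd)
lemma blt_C1w: "blt (length w) (C1w m w)"
  by (induction w) (auto intro!: blt_add blt_prepend blt_act)
lemma blt_C1: "blt (Suc k) y \<Longrightarrow> blt k (C1 m y)"
  unfolding C1_def
proof (rule blt_lin_ext)
  fix v assume "blt (Suc k) y" "v \<in> Poly_Mapping.keys y"
  then have "length v \<le> k" by (auto simp: blt_def)
  then show "blt k (C1w m v)" by (rule blt_mono[OF blt_C1w])
qed
lemma blt_0: "blt 0 y \<Longrightarrow> y = 0"
  by (auto simp: blt_def)
lemma C1pow_vanish: "blt k y \<Longrightarrow> (C1 m ^^ k) y = 0"
proof (induction k arbitrary: y)
  case 0 then show ?case by (simp add: blt_0)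
next
  case (Suc k)
  have "(C1 m ^^ Suc k) y = (C1 m ^^ k) (C1 m y)" by (metis funpow_Suc_right comp_apply)
  also have "\<dots> = 0" by (rule Suc.IH[OF blt_C1[OF Suc.prems]])
  finally show ?case .
qed
lemma blt_exists: "\<exists>k. blt k y"
proof -
  have "finite (length ` Poly_Mapping.keys y)" by simp
  then obtain k where "\<forall>u\<in>Poly_Mapping.keys y. length u \<le> k"
    by (meson finite_nat_set_iff_bounded_le imageI)
  hence "blt (Suc k) y" by (auto simp: blt_def less_Suc_eq_le)
  thus ?thesis ..
qed

definition qalg :: "'c::comm_ring_1 itself \<Rightarrow> bool" where
  "qalg _ \<longleftrightarrow> (\<forall>k::nat. k > 0 \<longrightarrow> (\<exists>u::'c. of_nat k * u = 1))"

lemma qinv_eq: "of_nat k * (u::'c::comm_ring_1) = 1 \<Longrightarrow> qinv k = u"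
  unfolding qinv_def
proof (rule the_equality)
  fix v :: 'c assume "of_nat k * u = 1" "of_nat k * v = 1"
  then have "v = v * (of_nat k * u)" by simp
  also have "\<dots> = (of_nat k * v) * u" by (simp add: ac_simps)
  finally show "v = u" using \<open>of_nat k * v = 1\<close> by simp
qed

lemma qinv_mult: "qalg TYPE('c::comm_ring_1) \<Longrightarrow> k > 0 \<Longrightarrow> of_nat k * (qinv k :: 'c) = 1"
  unfolding qalg_def by (metis qinv_eq)

lemma qinv_fact_Suc: "qalg TYPE('c::comm_ring_1) \<Longrightarrow> of_nat (Suc j) * (qinv (fact (Suc j)) :: 'c) = qinv (fact j)"
proof -
  assume q: "qalg TYPE('c)"
  have "of_nat (fact j) * (of_nat (Suc j) * (qinv (fact (Suc j)) :: 'c)) = of_nat (fact (Suc j)) * qinv (fact (Suc j))"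
    by (simp add: algebra_simps)
  also have "\<dots> = 1" by (rule qinv_mult[OF q]) simp
  finally show ?thesis by (intro qinv_eq[symmetric])
qed

lemma qinv_one [simp]: "qinv 1 = (1::'c::comm_ring_1)"
  by (rule qinv_eq) simp
lemma qinv_Suc0 [simp]: "qinv (Suc 0) = (1::'c::comm_ring_1)"
  by (rule qinv_eq) simp

definition Eop :: "('l \<Rightarrow> 'l \<Rightarrow> ('l \<Rightarrow>\<^sub>0 'c::comm_ring_1)) \<Rightarrow> 'c \<Rightarrow> nat \<Rightarrow> ('l list \<Rightarrow>\<^sub>0 'c) \<Rightarrow> ('l list \<Rightarrow>\<^sub>0 'c)" where
  "Eop m \<alpha> N x = (\<Sum>j\<le>N. smul (\<alpha> ^ j * qinv (fact j)) ((C1 m ^^ j) x))"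

lemma linear_Eop [simp, intro]: "linear_op (Eop m \<alpha> N)"
proof -
  have "Eop m \<alpha> N = (\<lambda>x. \<Sum>j\<le>N. smul (\<alpha> ^ j * qinv (fact j)) ((C1 m ^^ j) x))"
    by (rule ext) (simp add: Eop_def)
  moreover have "linear_op (\<lambda>x. \<Sum>j\<le>N. smul (\<alpha> ^ j * qinv (fact j)) ((C1 m ^^ j) x))"
    by (rule linear_sum_op, rule linear_sc, rule linear_funpow, rule linear_C1)
  ultimately show ?thesis by simp
qed


lemma Eop_prepend:
  assumes la: "lassoc m" and q: "qalg TYPE('c::comm_ring_1)"
  shows "Eop m (\<alpha>::'c) (Suc M) (prepend a y) = prepend a (Eop m \<alpha> (Suc M) y) + smul \<alpha> (act m a (Eop m \<alpha> M y))"
proof -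
  define c where "c j = \<alpha> ^ j * qinv (fact j)" for j
  have coef: "c (Suc i) * of_nat (Suc i) = \<alpha> * c i" for i
  proof -
    have "c (Suc i) * of_nat (Suc i) = \<alpha> * \<alpha> ^ i * (of_nat (Suc i) * qinv (fact (Suc i)))"
      by (simp add: c_def ac_simps)
    also have "\<dots> = \<alpha> * c i" by (simp only: qinv_fact_Suc[OF q] c_def mult.assoc)
    finally show ?thesis .
  qed
  let ?C = "C1 m"
  have "Eop m \<alpha> (Suc M) (prepend a y) = (\<Sum>j\<le>Suc M. smul (c j) ((?C ^^ j) (prepend a y)))"
    by (simp add: Eop_def c_def)
  also have "\<dots> = smul (c 0) (prepend a y) + (\<Sum>i\<le>M. smul (c (Suc i)) ((?C ^^ Suc i) (prepend a y)))"
    by (simp only: sum.atMost_Suc_shift funpow_0)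
  also have "\<dots> = smul (c 0) (prepend a y) + (\<Sum>i\<le>M. smul (c (Suc i)) (prepend a ((?C ^^ Suc i) y)))
      + (\<Sum>i\<le>M. smul (\<alpha> * c i) (act m a ((?C ^^ i) y)))"
    by (simp only: C1pow_prepend[OF la] smul_add smul_smul coef sum.distrib add.assoc)
  also have "smul (c 0) (prepend a y) + (\<Sum>i\<le>M. smul (c (Suc i)) (prepend a ((?C ^^ Suc i) y)))
      = prepend a (\<Sum>j\<le>Suc M. smul (c j) ((?C ^^ j) y))"
    by (simp only: sum.atMost_Suc_shift funpow_0 linD_add[OF linear_prepend] linD_sum[OF linear_prepend] linD_smul[OF linear_prepend])
  also have "(\<Sum>i\<le>M. smul (\<alpha> * c i) (act m a ((?C ^^ i) y))) = smul \<alpha> (act m a (\<Sum>i\<le>M. smul (c i) ((?C ^^ i) y)))"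
    by (simp add: linD_sum linD_smul smul_sum smul_smul)
  finally show ?thesis by (simp add: Eop_def c_def)
qed

lemma Eop_trunc:
  assumes z: "(C1 m ^^ Suc N) y = 0" and NM: "N \<le> M"
  shows "Eop m \<alpha> M y = Eop m \<alpha> N y"
  unfolding Eop_def
proof (rule sum.mono_neutral_right)
  show "\<forall>j\<in>{..M} - {..N}. smul (\<alpha> ^ j * qinv (fact j)) ((C1 m ^^ j) y) = 0"
  proof
    fix j assume "j \<in> {..M} - {..N}"
    then have j: "j = (j - Suc N) + Suc N" by auto
    have "(C1 m ^^ j) y = (C1 m ^^ (j - Suc N)) ((C1 m ^^ Suc N) y)"
      by (subst j, subst funpow_add) simp
    also have "\<dots> = 0" by (simp only: z linD_zero[OF linear_funpow[OF linear_C1]])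
    finally show "smul (\<alpha> ^ j * qinv (fact j)) ((C1 m ^^ j) y) = 0" by simp
  qed
qed (use NM in auto)

lemma C1pow_wd_vanish: "(C1 m ^^ Suc (length w)) (wd w) = 0"
  by (rule C1pow_vanish, rule blt_wd) simp

lemma Sw_exp0:
  assumes la: "lassoc m" and q: "qalg TYPE('c::comm_ring_1)"
  shows "Sw m (\<alpha>::'c) w = Eop m \<alpha> (length w) (wd w)"
proof (induction w)
  case Nil then show ?case by (simp add: Eop_def)
next
  case (Cons a w)
  have "Eop m \<alpha> (length (a # w)) (wd (a # w)) = Eop m \<alpha> (Suc (length w)) (prepend a (wd w))" by simp
  also have "\<dots> = prepend a (Eop m \<alpha> (Suc (length w)) (wd w)) + smul \<alpha> (act m a (Eop m \<alpha> (length w) (wd w)))"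
    by (rule Eop_prepend[OF la q])
  also have "Eop m \<alpha> (Suc (length w)) (wd w) = Eop m \<alpha> (length w) (wd w)"
    by (rule Eop_trunc[OF C1pow_wd_vanish]) simp
  finally show ?case using Cons by simp
qed

lemma Sop_exp:
  assumes la: "lassoc m" and q: "qalg TYPE('c::comm_ring_1)" and z: "(C1 m ^^ Suc N) y = 0"
  shows "Sop m (\<alpha>::'c) y = Eop m \<alpha> N y"
proof -
  obtain k where k: "blt k y" using blt_exists by blast
  define M where "M = max N k"
  have "Sop m \<alpha> y = lin_ext (Sw m \<alpha>) y" by (simp add: Sop_eq)
  also have "\<dots> = lin_ext (\<lambda>v. Eop m \<alpha> M (wd v)) y"
  proof (rule lin_ext_cong)
    fix v assume "v \<in> Poly_Mapping.keys y"
    then have "length v \<le> M" using k by (auto simp: blt_def M_def)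
    then have "Eop m \<alpha> M (wd v) = Eop m \<alpha> (length v) (wd v)" by (rule Eop_trunc[OF C1pow_wd_vanish])
    then show "Sw m \<alpha> v = Eop m \<alpha> M (wd v)" using Sw_exp0[OF la q, of \<alpha> v] by simp
  qed
  also have "\<dots> = Eop m \<alpha> M y"
    by (rule lin_expand[OF linear_Eop, symmetric])
  also have "\<dots> = Eop m \<alpha> N y" by (rule Eop_trunc[OF z]) (simp add: M_def)
  finally show ?thesis .
qed


section \<open>The formal identity log(exp X) = X\<close>

unbundle fps_syntax

definition Fexp :: "'c::comm_ring_1 fps" where
  "Fexp = Abs_fps (\<lambda>j. if j = 0 then 0 else qinv (fact j))"

lemma Fexp_nth: "Fexp $ j = (if j = 0 then 0 else qinv (fact j))"
  by (simp add: Fexp_def)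

lemma Fexp_deriv:
  assumes q: "qalg TYPE('c::comm_ring_1)"
  shows "fps_deriv (Fexp :: 'c fps) = 1 + Fexp"
proof (rule fps_ext)
  fix j
  have "fps_deriv (Fexp :: 'c fps) $ j = of_nat (Suc j) * qinv (fact (Suc j))"
    by (simp add: Fexp_nth del: fact_Suc)
  also have "\<dots> = qinv (fact j)" by (rule qinv_fact_Suc[OF q])
  also have "\<dots> = (1 + Fexp) $ j" by (simp add: Fexp_nth)
  finally show "fps_deriv (Fexp :: 'c fps) $ j = (1 + Fexp) $ j" .
qed

definition Glog :: "nat \<Rightarrow> 'c::comm_ring_1 fps" where
  "Glog n = (\<Sum>k\<in>{1..n}. fps_const ((-1) ^ (k - 1) * qinv k) * Fexp ^ k)"

lemma Glog_term_deriv: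
  assumes q: "qalg TYPE('c::comm_ring_1)" and k: "k \<ge> 1"
  shows "fps_deriv (fps_const ((-1) ^ (k - 1) * qinv k) * (Fexp :: 'c fps) ^ k) = (1 + Fexp) * (- Fexp) ^ (k - 1)"
proof -
  have c: "(-1) ^ (k - 1) * qinv k * of_nat k = ((-1) ^ (k - 1) :: 'c)"
  proof -
    have "qinv k * of_nat k = (1::'c)" using qinv_mult[OF q, of k] k by (simp add: mult.commute)
    then show ?thesis by (simp only: mult.assoc) simp
  qed
  have "fps_deriv (fps_const ((-1) ^ (k - 1) * qinv k) * (Fexp :: 'c fps) ^ k)
      = fps_const ((-1) ^ (k - 1) * qinv k) * (of_nat k * (1 + Fexp) * Fexp ^ (k - 1))"
    by (simp add: fps_deriv_power' Fexp_deriv[OF q])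
  also have "\<dots> = (1 + Fexp) * (fps_const ((-1) ^ (k - 1) * qinv k * of_nat k) * Fexp ^ (k - 1))"
    by (simp add: fps_of_nat[symmetric] fps_const_mult[symmetric] ac_simps del: fps_const_mult)
  also have "\<dots> = (1 + Fexp) * (- Fexp) ^ (k - 1)"
    by (simp only: c) (simp add: power_minus[of Fexp] fps_const_neg[symmetric] fps_const_power[symmetric])
  finally show ?thesis .
qed

lemma Glog_nth:
  assumes q: "qalg TYPE('c::comm_ring_1)" and j: "j \<le> n"
  shows "(Glog n :: 'c fps) $ j = (if j = 1 then 1 else 0)"
proof (cases j)
  case 0
  have "(Fexp ^ k :: 'c fps) $ 0 = 0" if "k \<in> {1..n}" for k
    using that by (intro startsby_zero_power) (auto simp: Fexp_nth)
  then show ?thesis using 0 by (simp add: Glog_def fps_sum_nth)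
next
  case (Suc i)
  have i: "i < n" using j Suc by simp
  have "fps_deriv (Glog n :: 'c fps) = (\<Sum>k\<in>{1..n}. (1 + Fexp) * (- Fexp) ^ (k - 1))"
    unfolding Glog_def fps_deriv_sum by (rule sum.cong[OF refl], rule Glog_term_deriv[OF q]) auto
  also have "\<dots> = (1 + Fexp) * (\<Sum>k<n. (- Fexp) ^ k)"
    by (simp add: sum.atLeast1_atMost_eq sum_distrib_left)
  also have "\<dots> = 1 - (- Fexp) ^ n"
    by (simp add: one_diff_power_eq[of "- Fexp" n])
  finally have d: "fps_deriv (Glog n :: 'c fps) = 1 - (- Fexp) ^ n" .
  have "((- Fexp) ^ n :: 'c fps) $ i = 0"
    using startsby_zero_power_prefix[of "- Fexp :: 'c fps" n] i by (simp add: Fexp_nth)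
  then have "of_nat (Suc i) * (Glog n :: 'c fps) $ Suc i = (if i = 0 then 1 else 0)"
    using arg_cong[OF d, of "\<lambda>f. f $ i"] by simp
  then have "qinv (Suc i) * (of_nat (Suc i) * (Glog n :: 'c fps) $ Suc i) = qinv (Suc i) * (if i = 0 then 1 else 0)"
    by simp
  then have "(Glog n :: 'c fps) $ Suc i = (if i = 0 then 1 else 0)"
    using qinv_mult[OF q, of "Suc i"] by (simp add: mult.assoc[symmetric] mult.commute[of "qinv (Suc i)"] split: if_splits)
  then show ?thesis using Suc by simp
qed


section \<open>Evaluating power series at C1\<close>

definition evF :: "('l \<Rightarrow> 'l \<Rightarrow> ('l \<Rightarrow>\<^sub>0 'c::comm_ring_1)) \<Rightarrow> nat \<Rightarrow> 'c fps \<Rightarrow> ('l list \<Rightarrow>\<^sub>0 'c) \<Rightarrow> ('l list \<Rightarrow>\<^sub>0 'c)" where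
  "evF m N p y = (\<Sum>j\<le>N. smul (p $ j) ((C1 m ^^ j) y))"

lemma linear_evF [simp, intro]: "linear_op (evF m N p)"
proof -
  have "evF m N p = (\<lambda>y. \<Sum>j\<le>N. smul (p $ j) ((C1 m ^^ j) y))"
    by (rule ext) (simp add: evF_def)
  moreover have "linear_op (\<lambda>y. \<Sum>j\<le>N. smul (p $ j) ((C1 m ^^ j) y))"
    by (rule linear_sum_op, rule linear_sc, rule linear_funpow, rule linear_C1)
  ultimately show ?thesis by simp
qed

lemma evF_add: "evF m N (p + q) y = evF m N p y + evF m N q y"
  by (simp add: evF_def smul_add_left sum.distrib)
lemma evF_const: "evF m N (fps_const c * p) y = smul c (evF m N p y)"
  by (simp add: evF_def smul_sum smul_smul)
lemma evF_zero: "evF m N 0 y = 0"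
  by (simp add: evF_def)
lemma evF_sum: "evF m N (\<Sum>k\<in>K. f k) y = (\<Sum>k\<in>K. evF m N (f k) y)"
  by (induction K rule: infinite_finite_induct) (simp_all add: evF_add evF_zero)
lemma evF_one: "evF m N 1 y = y"
proof -
  have "evF m N 1 y = (\<Sum>j\<le>N. if j = 0 then y else 0)"
    unfolding evF_def by (rule sum.cong) auto
  then show ?thesis by simp
qed

lemma C1pow_comm: "(C1 m ^^ i) ((C1 m ^^ j) y) = (C1 m ^^ j) ((C1 m ^^ i) y)"
  by (metis add.commute comp_apply funpow_add)

lemma C1pow_evF: "(C1 m ^^ i) (evF m N p y) = evF m N p ((C1 m ^^ i) y)"
  by (simp add: evF_def linD_sum[OF linear_funpow[OF linear_C1]] linD_smul[OF linear_funpow[OF linear_C1]] C1pow_comm)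

lemma C1pow_vanish2:
  assumes z: "(C1 m ^^ Suc N) y = 0" and j: "N < j"
  shows "(C1 m ^^ j) y = 0"
proof -
  from j have jj: "j = (j - Suc N) + Suc N" by auto
  have "(C1 m ^^ j) y = (C1 m ^^ (j - Suc N)) ((C1 m ^^ Suc N) y)"
    by (subst jj, subst funpow_add) simp
  also have "\<dots> = 0" by (simp only: z linD_zero[OF linear_funpow[OF linear_C1]])
  finally show ?thesis .
qed

lemma evF_mult:
  assumes z: "(C1 m ^^ Suc N) y = 0"
  shows "evF m N p (evF m N q y) = evF m N (p * q) y"
proof -
  define T where "T i j = smul (p $ i * q $ j) ((C1 m ^^ (i + j)) y)" for i j
  have T0: "T i j = 0" if "N < i + j" for i j
    using C1pow_vanish2[OF z that] by (simp add: T_def)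
  have "evF m N p (evF m N q y) = (\<Sum>i\<le>N. \<Sum>j\<le>N. T i j)"
    unfolding evF_def T_def
    by (simp add: linD_sum[OF linear_funpow[OF linear_C1]] linD_smul[OF linear_funpow[OF linear_C1]]
        smul_sum smul_smul funpow_add)
  also have "\<dots> = (\<Sum>(i,j)\<in>{..N} \<times> {..N}. T i j)"
    by (simp add: sum.cartesian_product)
  also have "\<dots> = (\<Sum>(i,j)\<in>{(i,j). i + j \<le> N}. T i j)"
  proof (rule sum.mono_neutral_right)
    show "finite ({..N} \<times> {..N})" by simp
    show "{(i, j). i + j \<le> N} \<subseteq> {..N} \<times> {..N}" by auto
    show "\<forall>x\<in>{..N} \<times> {..N} - {(i, j). i + j \<le> N}. (case x of (i, j) \<Rightarrow> T i j) = 0"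
    proof
      fix x assume "x \<in> {..N} \<times> {..N} - {(i, j). i + j \<le> N}"
      then obtain i j where "x = (i, j)" "N < i + j" by auto
      then show "(case x of (i, j) \<Rightarrow> T i j) = 0" using T0 by simp
    qed
  qed
  also have "\<dots> = (\<Sum>k\<le>N. \<Sum>i\<le>k. T i (k - i))"
    by (rule sum.triangle_reindex_eq)
  also have "\<dots> = evF m N (p * q) y"
    unfolding evF_def fps_mult_nth T_def
    by (rule sum.cong[OF refl]) (simp add: sum_smul_left atLeast0AtMost)
  finally show ?thesis .
qed

lemma S_minus_evF:
  assumes la: "lassoc m" and q: "qalg TYPE('c::comm_ring_1)" and z: "(C1 m ^^ Suc N) (y::'l list \<Rightarrow>\<^sub>0 'c) = 0"
  shows "Sop m 1 y - y = evF m N Fexp y"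
proof -
  have "Sop m 1 y = Eop m 1 N y" by (rule Sop_exp[OF la q z])
  also have "\<dots> = evF m N (1 + Fexp) y"
    unfolding Eop_def evF_def by (rule sum.cong) (auto simp: Fexp_nth)
  finally show ?thesis by (simp add: evF_add evF_one)
qed

lemma S_minus_pow:
  assumes la: "lassoc m" and q: "qalg TYPE('c::comm_ring_1)" and z: "(C1 m ^^ Suc N) (y::'l list \<Rightarrow>\<^sub>0 'c) = 0"
  shows "((\<lambda>x. Sop m 1 x - x) ^^ k) y = evF m N (Fexp ^ k) y"
proof (induction k)
  case 0 then show ?case by (simp add: evF_one)
next
  case (Suc k)
  have z2: "(C1 m ^^ Suc N) (evF m N (Fexp ^ k) y) = 0"
    by (simp only: C1pow_evF z linD_zero[OF linear_evF])
  have "((\<lambda>x. Sop m 1 x - x) ^^ Suc k) y = Sop m 1 (evF m N (Fexp ^ k) y) - evF m N (Fexp ^ k) y"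
    using Suc by simp
  also have "\<dots> = evF m N Fexp (evF m N (Fexp ^ k) y)" by (rule S_minus_evF[OF la q z2])
  also have "\<dots> = evF m N (Fexp ^ Suc k) y" by (simp add: evF_mult[OF z])
  finally show ?case .
qed

lemma logS_wd:
  assumes la: "lassoc m" and q: "qalg TYPE('c::comm_ring_1)"
  shows "logS m (wd w :: 'l list \<Rightarrow>\<^sub>0 'c) = C1 m (wd w)"
proof -
  let ?n = "length w"
  have z: "(C1 m ^^ Suc ?n) (wd w :: 'l list \<Rightarrow>\<^sub>0 'c) = 0" by (rule C1pow_wd_vanish)
  have "logS m (wd w :: 'l list \<Rightarrow>\<^sub>0 'c) = (\<Sum>k\<in>{1..?n}. smul ((-1) ^ (k - 1) * qinv k) (((\<lambda>x. Sop m 1 x - x) ^^ k) (wd w)))"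
    by (simp add: logS_def)
  also have "\<dots> = (\<Sum>k\<in>{1..?n}. evF m ?n (fps_const ((-1) ^ (k - 1) * qinv k) * Fexp ^ k) (wd w))"
    by (simp add: S_minus_pow[OF la q z] evF_const)
  also have "\<dots> = evF m ?n (Glog ?n) (wd w)"
    by (simp add: Glog_def evF_sum)
  also have "\<dots> = (\<Sum>j\<le>?n. smul (if j = 1 then 1 else 0) ((C1 m ^^ j) (wd w)))"
    unfolding evF_def by (rule sum.cong) (auto simp: Glog_nth[OF q])
  also have "\<dots> = C1 m (wd w)"
  proof (cases w)
    case Nil then show ?thesis by simp
  next
    case (Cons a v)
    have "(\<Sum>j\<le>?n. smul (if j = 1 then 1 else 0) ((C1 m ^^ j) (wd w))) = (\<Sum>j\<le>?n. if j = 1 then C1 m (wd w) else 0)"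
      by (rule sum.cong) auto
    also have "\<dots> = (if 1 \<in> {..?n} then C1 m (wd w) else 0)" by (rule sum.delta[OF finite_atMost])
    also have "\<dots> = C1 m (wd w)" using Cons by simp
    finally show ?thesis .
  qed
  finally show ?thesis .
qed

lemma logS_C1:
  assumes la: "lassoc m" and q: "qalg TYPE('c::comm_ring_1)"
  shows "logS m (x :: 'l list \<Rightarrow>\<^sub>0 'c) = C1 m x"
proof -
  have "logS m = lin_ext (\<lambda>w. \<Sum>k\<in>{1..length w}.
      smul ((-1) ^ (k - 1) * qinv k) (((\<lambda>x. Sop m 1 x - x) ^^ k) (wd w)))"
    by (rule ext) (simp add: logS_def)
  then have l: "linear_op (logS m)" by simp
  show ?thesis by (rule lin_eq[OF l linear_C1]) (rule logS_wd[OF la q])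
qed


definition rhom :: "('c::comm_ring_1 \<Rightarrow> 'd::comm_ring_1) \<Rightarrow> bool" where
  "rhom h \<longleftrightarrow> h 0 = 0 \<and> (\<forall>a b. h (a + b) = h a + h b) \<and> (\<forall>a b. h (a * b) = h a * h b) \<and> h 1 = 1"

definition mapm :: "('c \<Rightarrow> 'd) \<Rightarrow> ('l \<Rightarrow> 'l \<Rightarrow> ('l \<Rightarrow>\<^sub>0 'c::comm_ring_1)) \<Rightarrow> 'l \<Rightarrow> 'l \<Rightarrow> ('l \<Rightarrow>\<^sub>0 'd::comm_ring_1)" where
  "mapm h m a b = coeff_map h (m a b)"

lemma lookup_cm: "h 0 = 0 \<Longrightarrow> Poly_Mapping.lookup (coeff_map h x) k = h (Poly_Mapping.lookup x k)"
  by (simp add: coeff_map_def Poly_Mapping.map.rep_eq when_def)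

lemma keys_cm: "h 0 = 0 \<Longrightarrow> Poly_Mapping.keys (coeff_map h x) \<subseteq> Poly_Mapping.keys x"
  by (auto simp: in_keys_iff lookup_cm)

lemma cm_add: "h 0 = 0 \<Longrightarrow> (\<And>a b. h (a + b) = h a + h b) \<Longrightarrow> coeff_map h (x + y) = coeff_map h x + coeff_map h y"
  by (rule poly_mapping_eqI) (simp add: lookup_cm lookup_add)

lemma cm_zero [simp]: "h 0 = 0 \<Longrightarrow> coeff_map h 0 = 0"
  by (rule poly_mapping_eqI) (simp add: lookup_cm)

lemma cm_sum: "h 0 = 0 \<Longrightarrow> (\<And>a b. h (a + b) = h a + h b) \<Longrightarrow> coeff_map h (sum f A) = (\<Sum>a\<in>A. coeff_map h (f a))"
  by (induction A rule: infinite_finite_induct) (simp_all add: cm_add)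

lemma cm_smul: "rhom h \<Longrightarrow> coeff_map h (smul c x) = smul (h c) (coeff_map h x)"
  by (rule poly_mapping_eqI) (simp add: lookup_cm rhom_def)

lemma cm_single: "h 0 = 0 \<Longrightarrow> coeff_map h (Poly_Mapping.single k c) = Poly_Mapping.single k (h c)"
  by (rule poly_mapping_eqI) (simp add: lookup_cm lookup_single when_def)

lemma cm_wd [simp]: "rhom h \<Longrightarrow> coeff_map h (wd w) = wd w"
  by (simp add: wd_def cm_single rhom_def)

lemma cm_lin_ext:
  assumes h: "rhom h"
  shows "coeff_map h (lin_ext f x) = lin_ext (\<lambda>v. coeff_map h (f v)) (coeff_map h x)"
proof -
  have h0: "h 0 = 0" using h by (simp add: rhom_def)
  have "lin_ext (\<lambda>v. coeff_map h (f v)) (coeff_map h x)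
      = (\<Sum>v\<in>Poly_Mapping.keys x. smul (Poly_Mapping.lookup (coeff_map h x) v) (coeff_map h (f v)))"
    by (rule lin_ext_superset[OF _ keys_cm[of h x, OF h0]]) simp
  also have "\<dots> = coeff_map h (lin_ext f x)"
    using h by (simp add: lin_ext_def cm_sum rhom_def cm_smul lookup_cm)
  finally show ?thesis by simp
qed

lemma cm_prepend: "rhom h \<Longrightarrow> coeff_map h (prepend a x) = prepend a (coeff_map h x)"
  by (simp add: prepend_def cm_lin_ext)

lemma cm_act: "rhom h \<Longrightarrow> coeff_map h (act m a x) = act (mapm h m) a (coeff_map h x)"
proof -
  assume h: "rhom h"
  have "coeff_map h (act m a x) = lin_ext (\<lambda>u. coeff_map h (case u of [] \<Rightarrow> 0 | b # v \<Rightarrow> lin_ext (\<lambda>c. wd (c # v)) (m a b))) (coeff_map h x)"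
    unfolding act_def by (rule cm_lin_ext[OF h])
  also have "\<dots> = act (mapm h m) a (coeff_map h x)"
    unfolding act_def
  proof (rule lin_ext_cong)
    fix u show "coeff_map h (case u of [] \<Rightarrow> 0 | b # v \<Rightarrow> lin_ext (\<lambda>c. wd (c # v)) (m a b))
      = (case u of [] \<Rightarrow> 0 | b # v \<Rightarrow> lin_ext (\<lambda>c. wd (c # v)) (mapm h m a b))"
      using h by (cases u) (simp_all add: rhom_def cm_lin_ext mapm_def)
  qed
  finally show ?thesis .
qed

lemma cm_zmult: "rhom h \<Longrightarrow> coeff_map h (zmult m x y) = zmult (mapm h m) (coeff_map h x) (coeff_map h y)"
  by (simp add: zmult_def cm_lin_ext mapm_def)

lemma cm_C1w: "rhom h \<Longrightarrow> coeff_map h (C1w m w) = C1w (mapm h m) w"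
  by (induction w) (simp_all add: cm_add rhom_def cm_prepend cm_act)

lemma cm_C1: "rhom h \<Longrightarrow> coeff_map h (C1 m x) = C1 (mapm h m) (coeff_map h x)"
  by (simp add: C1_def cm_lin_ext cm_C1w)

lemma cm_C1pow: "rhom h \<Longrightarrow> coeff_map h ((C1 m ^^ j) x) = (C1 (mapm h m) ^^ j) (coeff_map h x)"
  by (induction j) (simp_all add: cm_C1)

lemma lassoc_mapm:
  assumes h: "rhom h" and la: "lassoc m"
  shows "lassoc (mapm h m)"
  unfolding lassoc_def
proof (intro allI)
  fix a b d
  have s: "Poly_Mapping.single x 1 = coeff_map h (Poly_Mapping.single x 1)" for x
    using h by (simp add: cm_single rhom_def)
  have "zmult (mapm h m) (mapm h m a b) (Poly_Mapping.single d 1)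
      = coeff_map h (zmult m (m a b) (Poly_Mapping.single d 1))"
    by (subst s) (simp add: cm_zmult[OF h] mapm_def)
  also have "\<dots> = coeff_map h (zmult m (Poly_Mapping.single a 1) (m b d))"
    using la by (simp add: lassoc_def)
  also have "\<dots> = zmult (mapm h m) (coeff_map h (Poly_Mapping.single a 1)) (coeff_map h (m b d))"
    by (rule cm_zmult[OF h])
  also have "\<dots> = zmult (mapm h m) (Poly_Mapping.single a 1) (mapm h m b d)"
    by (simp only: s[symmetric] mapm_def)
  finally show "zmult (mapm h m) (mapm h m a b) (Poly_Mapping.single d 1) = zmult (mapm h m) (Poly_Mapping.single a 1) (mapm h m b d)" .
qed

lemma rhom_pCons: "rhom (\<lambda>c::'c::comm_ring_1. [:c:])"
  by (simp add: rhom_def)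
lemma rhom_pCons2: "rhom (\<lambda>c::'c::comm_ring_1. [:[:c:]:])"
  by (simp add: rhom_def one_pCons)

lemma mult_t_eq: "mult_t m = mapm (\<lambda>c. [:c:]) m"
  by (simp add: mult_t_def mapm_def fun_eq_iff)
lemma mult_tt_eq: "mult_tt m = mapm (\<lambda>c. [:[:c:]:]) m"
  by (simp add: mult_tt_def mapm_def fun_eq_iff)

lemma qalg_poly: "qalg TYPE('c::comm_ring_1) \<Longrightarrow> qalg TYPE('c poly)"
  unfolding qalg_def
proof (intro allI impI)
  fix k :: nat assume "\<forall>k. 0 < k \<longrightarrow> (\<exists>u::'c. of_nat k * u = 1)" "0 < k"
  then obtain u :: 'c where "of_nat k * u = 1" by blast
  then have "of_nat k * [:u:] = (1 :: 'c poly)" by (simp add: of_nat_poly one_pCons mult.commute)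
  then show "\<exists>u::'c poly. of_nat k * u = 1" ..
qed

lemma qinv_poly: "qalg TYPE('c::comm_ring_1) \<Longrightarrow> k > 0 \<Longrightarrow> (qinv k :: 'c poly) = [:qinv k:]"
proof (rule qinv_eq)
  assume "qalg TYPE('c)" "k > 0"
  then have "of_nat k * qinv k = (1::'c)" by (rule qinv_mult)
  then show "of_nat k * [:qinv k:] = (1::'c poly)" by (simp add: of_nat_poly one_pCons mult.commute)
qed


lemma coeff_dt: "coeff (dt p) k = of_nat (Suc k) * coeff p (Suc k)"
proof -
  have "coeff (dt p) k = (\<Sum>i\<le>degree p. if i - 1 = k then of_nat i * coeff p i else 0)"
    by (simp add: dt_def coeff_sum)
  also have "\<dots> = (\<Sum>i\<le>degree p. if i = Suc k then of_nat i * coeff p i else 0)"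
    by (rule sum.cong[OF refl]) (rename_tac i, case_tac i, auto)
  also have "\<dots> = of_nat (Suc k) * coeff p (Suc k)"
    by (simp add: sum.delta coeff_eq_0)
  finally show ?thesis .
qed

lemma dt_add: "dt (p + q) = dt p + dt q"
  by (rule poly_eqI) (simp add: coeff_dt algebra_simps)
lemma dt_zero [simp]: "dt 0 = 0"
  by (rule poly_eqI) (simp add: coeff_dt)
lemma dt_smult: "dt (smult c p) = smult c (dt p)"
  by (rule poly_eqI) (simp add: coeff_dt algebra_simps)
lemma dt_mult_const: "dt (p * [:c:]) = dt p * [:c:]"
  by (rule poly_eqI) (simp add: coeff_dt algebra_simps)
lemma dt_monom_Suc: "dt (monom c (Suc i)) = monom (of_nat (Suc i) * c) i"
  by (rule poly_eqI) (simp add: coeff_dt)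
lemma dt_monom_0: "dt (monom c 0) = 0"
  by (rule poly_eqI) (simp add: coeff_dt)

lemma D_smul_const:
  "coeff_map dt (smul p (coeff_map (\<lambda>c. [:c:]) z)) = smul (dt p) (coeff_map (\<lambda>c. [:c:]) z)"
  by (rule poly_mapping_eqI) (simp add: lookup_cm dt_mult_const dt_smult)

lemma shift_sum_aux:
  fixes P :: "nat \<Rightarrow> 'c::comm_ring_1" and Z :: "nat \<Rightarrow> ('l list \<Rightarrow>\<^sub>0 'c)"
  assumes "dP 0 = 0" "\<And>i. dP (Suc i) = P i"
  shows "(\<Sum>j\<le>n. smul (dP j) (Z j)) = (\<Sum>i<n. smul (P i) (Z (Suc i)))"
  by (induction n) (simp_all add: assms)

lemma deriv_part:
  fixes m :: "'l \<Rightarrow> 'l \<Rightarrow> ('l \<Rightarrow>\<^sub>0 'r::comm_ring_1)"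
  assumes la: "lassoc m" and q: "qalg TYPE('r::comm_ring_1)"
  shows "coeff_map dt (Sop (mult_t m) [:0, 1:] (wd w)) = Sop (mult_t m) [:0, 1:] (C1 (mult_t m) (wd w))"
proof -
  let ?c = "\<lambda>c::'r. [:c:]"
  let ?M = "mult_t m"
  have laM: "lassoc ?M" unfolding mult_t_eq by (rule lassoc_mapm[OF rhom_pCons la])
  have qP: "qalg TYPE('r poly)" by (rule qalg_poly[OF q])
  define P where "P j = [:0, 1:] ^ j * (qinv (fact j) :: 'r poly)" for j
  have Pm: "P j = monom (qinv (fact j)) j" for j
    by (simp add: P_def qinv_poly[OF q] monom_altdef)
  have dP0: "dt (P 0) = 0" by (simp add: Pm dt_monom_0 del: fact_0)
  have dPS: "dt (P (Suc i)) = P i" for i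
    by (simp only: Pm dt_monom_Suc qinv_fact_Suc[OF q])
  define Z where "Z j = coeff_map ?c ((C1 m ^^ j) (wd w))" for j
  have CZ: "(C1 ?M ^^ j) (wd w) = Z j" for j
    using cm_C1pow[OF rhom_pCons, where m=m and j=j and x="wd w"] by (simp add: Z_def mult_t_eq rhom_pCons)
  let ?n = "length w"
  have "Sop ?M [:0, 1:] (wd w) = Eop ?M [:0, 1:] ?n (wd w)"
    by (simp add: Sw_exp0[OF laM qP])
  also have "\<dots> = (\<Sum>j\<le>?n. smul (P j) (Z j))"
    by (simp add: Eop_def P_def CZ)
  finally have L: "coeff_map dt (Sop ?M [:0, 1:] (wd w)) = (\<Sum>j\<le>?n. smul (dt (P j)) (Z j))"
    by (simp add: cm_sum dt_add Z_def D_smul_const)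
  have zz: "(C1 ?M ^^ Suc ?n) (C1 ?M (wd w)) = 0"
  proof -
    have "(C1 ?M ^^ Suc (Suc ?n)) (wd w) = (C1 ?M ^^ Suc ?n) (C1 ?M (wd w))"
      using fun_cong[OF funpow_Suc_right[of "Suc ?n" "C1 ?M"], of "wd w"] by (simp only: comp_apply)
    moreover have "(C1 ?M ^^ Suc (Suc ?n)) (wd w) = 0"
      by (rule C1pow_vanish2[OF C1pow_wd_vanish]) simp
    ultimately show ?thesis by simp
  qed
  have "Sop ?M [:0, 1:] (C1 ?M (wd w)) = Eop ?M [:0, 1:] ?n (C1 ?M (wd w))"
    by (rule Sop_exp[OF laM qP zz])
  also have "\<dots> = (\<Sum>j\<le>?n. smul (P j) (Z (Suc j)))"
    unfolding Eop_def P_def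
  proof (rule sum.cong[OF refl])
    fix j
    have "(C1 ?M ^^ j) (C1 ?M (wd w)) = Z (Suc j)"
      using fun_cong[OF funpow_Suc_right[of j "C1 ?M"], of "wd w"] CZ[of "Suc j"] by (simp only: comp_apply)
    then show "smul ([:0, 1:] ^ j * qinv (fact j)) ((C1 ?M ^^ j) (C1 ?M (wd w))) = smul ([:0, 1:] ^ j * qinv (fact j)) (Z (Suc j))"
      by simp
  qed
  also have "\<dots> = (\<Sum>i<?n. smul (P i) (Z (Suc i)))"
  proof -
    have "Z (Suc ?n) = 0" unfolding Z_def by (simp only: C1pow_wd_vanish) (simp add: rhom_def)
    then show ?thesis by (simp add: lessThan_Suc_atMost[symmetric])
  qed
  finally show ?thesis using L shift_sum_aux[of "\<lambda>j. dt (P j)" P, OF dP0 dPS] by simp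
qed

section \<open>Combinatorics of contractions with sigma = 1\<close>

definition Pj :: "('l \<Rightarrow> 'l \<Rightarrow> ('l \<Rightarrow>\<^sub>0 'c::comm_ring_1)) \<Rightarrow> nat \<Rightarrow> 'l list \<Rightarrow> ('l list \<Rightarrow>\<^sub>0 'c)" where
  "Pj m j w = foldr prepend (take (j - 1) w) (liftw (drop (j + 1) w) (m (w ! (j - 1)) (w ! j)))"

lemma Pj_Suc: "1 \<le> j \<Longrightarrow> prepend a (Pj m j w) = Pj m (Suc j) (a # w)"
  by (cases j) (simp_all add: Pj_def)

lemma Pj_one: "Pj m 1 (a # b # v) = liftw v (m a b)"
  by (simp add: Pj_def)

lemma C1w_Pj: "C1w m w = (\<Sum>j\<in>{1..<length w}. Pj m j w)"
proof (induction w)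
  case Nil then show ?case by simp
next
  case (Cons a w)
  show ?case
  proof (cases w)
    case Nil then show ?thesis by (simp add: linD_zero)
  next
    case (Cons b v)
    have "C1w m (a # w) = prepend a (\<Sum>j\<in>{1..<length w}. Pj m j w) + act m a (wd w)"
      using Cons.IH by simp
    also have "\<dots> = (\<Sum>j\<in>{1..<length w}. Pj m (Suc j) (a # w)) + Pj m 1 (a # w)"
    proof -
      have "prepend a (\<Sum>j\<in>{1..<length w}. Pj m j w) = (\<Sum>j\<in>{1..<length w}. prepend a (Pj m j w))"
        by (rule linD_sum[OF linear_prepend])
      also have "\<dots> = (\<Sum>j\<in>{1..<length w}. Pj m (Suc j) (a # w))"
        by (rule sum.cong) (auto simp: Pj_Suc)
      finally have e1: "prepend a (\<Sum>j\<in>{1..<length w}. Pj m j w) = (\<Sum>j\<in>{1..<length w}. Pj m (Suc j) (a # w))" .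
      have e2: "act m a (wd w) = Pj m 1 (a # w)" using Cons by (simp add: Pj_def)
      show ?thesis by (simp only: e1 e2)
    qed
    also have "\<dots> = (\<Sum>j\<in>{1..<length (a # w)}. Pj m j (a # w))"
    proof -
      have "(\<Sum>j\<in>{1..<Suc (length w)}. Pj m j (a # w)) = Pj m 1 (a # w) + (\<Sum>j\<in>{Suc 1..<Suc (length w)}. Pj m j (a # w))"
        by (rule sum.atLeast_Suc_lessThan) (simp add: Cons)
      also have "\<dots> = Pj m 1 (a # w) + (\<Sum>j\<in>{1..<length w}. Pj m (Suc j) (a # w))"
        by (simp only: sum.shift_bounds_Suc_ivl)
      finally show ?thesis by (simp only: length_Cons add.commute)
    qed
    finally show ?thesis .
  qed
qed

definition rr :: "nat \<Rightarrow> nat \<Rightarrow> nat list" where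
  "rr n j = [0..<j] @ [Suc j..<Suc n]"

lemma set_rr: "j \<le> n \<Longrightarrow> set (rr n j) = {0..n} - {j}"
  by (auto simp: rr_def)

lemma rr_in:
  assumes "1 \<le> j" "j < n"
  shows "rr n j \<in> {r \<in> Rseq n. sigma n r = 1}"
proof -
  have "sorted_wrt (<) (rr n j)"
    by (auto simp: rr_def sorted_wrt_append)
  moreover have "hd (rr n j) = 0" using assms by (simp add: rr_def)
  moreover have "last (rr n j) = n" using assms by (simp add: rr_def)
  moreover have "length (rr n j) = n" using assms by (simp add: rr_def)
  moreover have "set (rr n j) \<subseteq> {0..n}" using assms by (simp add: set_rr)
  moreover have "rr n j \<noteq> []" using assms by (simp add: rr_def)
  ultimately show ?thesis using assms by (simp add: Rseq_def sigma_def)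
qed

lemma rr_surj:
  assumes r: "r \<in> Rseq n" and s: "sigma n r = 1"
  shows "\<exists>j\<in>{1..<n}. r = rr n j"
proof -
  have ne: "r \<noteq> []" and sw: "sorted_wrt (<) r" and sub: "set r \<subseteq> {0..n}" and h: "hd r = 0" and l: "last r = n"
    using r by (auto simp: Rseq_def)
  have d: "distinct r" using sw by (simp add: strict_sorted_iff)
  have "card (set r) \<le> card {0..n}" using sub by (intro card_mono) auto
  then have len: "length r \<le> Suc n" using distinct_card[OF d] by simp
  have n1: "n \<ge> 1" using s by (cases n) (auto simp: sigma_def)
  have l1: "length r \<ge> 1" using ne by (cases r) auto
  have "n - (length r - 1) = 1" using s by (simp add: sigma_def)
  then have lr: "length r = n" using l1 len n1 by linarith
  have "card ({0..n} - set r) = 1"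
    using sub distinct_card[OF d] lr by (simp add: card_Diff_subset)
  then obtain j where j: "{0..n} - set r = {j}" by (rule card_1_singletonE)
  have "hd r \<in> set r" by (rule hd_in_set[OF ne])
  then have r0: "0 \<in> set r" using h by simp
  have "last r \<in> set r" by (rule last_in_set[OF ne])
  then have rn: "n \<in> set r" using l by simp
  have jin: "j \<in> {0..n} - set r" using j by simp
  then have jn: "j \<le> n" and jnr: "j \<notin> set r" by auto
  have jr0: "j \<noteq> 0" using r0 jnr by (intro notI) simp
  have jrn: "j \<noteq> n" using rn jnr by (intro notI) simp
  have jr: "j \<noteq> 0" "j \<noteq> n" "j \<le> n" using jr0 jrn jn by auto
  have sr: "set r = {0..n} - {j}" using j sub jnr by blast
  have s1: "sorted_wrt (<) (rr n j)" by (auto simp: rr_def sorted_wrt_append)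
  have s2: "set r = set (rr n j)" using jn by (simp add: sr set_rr)
  have "r = rr n j" by (rule strict_sorted_equal[OF s1 sw s2])
  then show ?thesis using jr by auto
qed

lemma rr_inj: "inj_on (rr n) {1..<n}"
proof
  fix i j assume "i \<in> {1..<n}" "j \<in> {1..<n}" "rr n i = rr n j"
  then have "set (rr n i) = set (rr n j)" by simp
  then have "{0..n} - {i} = {0..n} - {j}" using \<open>i \<in> {1..<n}\<close> \<open>j \<in> {1..<n}\<close> by (simp add: set_rr)
  then have "(i \<in> {0..n} - {i}) = (i \<in> {0..n} - {j})" by (rule arg_cong)
  then show "i = j" using \<open>i \<in> {1..<n}\<close> by simp
qed

lemma rr_bij: "bij_betw (rr n) {1..<n} {r \<in> Rseq n. sigma n r = 1}"
  unfolding bij_betw_def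
proof
  show "inj_on (rr n) {1..<n}" by (rule rr_inj)
  show "rr n ` {1..<n} = {r \<in> Rseq n. sigma n r = 1}"
  proof
    show "rr n ` {1..<n} \<subseteq> {r \<in> Rseq n. sigma n r = 1}"
    proof
      fix r assume "r \<in> rr n ` {1..<n}"
      then obtain j where "j \<in> {1..<n}" "r = rr n j" by blast
      then show "r \<in> {r \<in> Rseq n. sigma n r = 1}" using rr_in[of j n] by simp
    qed
    show "{r \<in> Rseq n. sigma n r = 1} \<subseteq> rr n ` {1..<n}"
    proof
      fix r assume "r \<in> {r \<in> Rseq n. sigma n r = 1}"
      then obtain j where "j \<in> {1..<n}" "r = rr n j" using rr_surj by blast
      then show "r \<in> rr n ` {1..<n}" by (rule rev_image_eqI)
    qed
  qed
qed

abbreviation sg :: "'l \<Rightarrow> ('l \<Rightarrow>\<^sub>0 'c::comm_ring_1)" where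
  "sg a \<equiv> Poly_Mapping.single a 1"

lemma wprod_sg: "wprod (map sg ys) = (wd ys :: 'l list \<Rightarrow>\<^sub>0 'c::comm_ring_1)"
  by (induction ys) simp_all

lemma wprod_append: "wprod (map sg xs @ L) = foldr prepend xs (wprod (L :: ('l \<Rightarrow>\<^sub>0 'c::comm_ring_1) list))"
  by (induction xs) simp_all

lemma rr_nth: "i < n \<Longrightarrow> rr n j ! i = (if i < j then i else Suc i)"
  by (simp add: rr_def nth_append del: upt_Suc)

lemma take1: "i < length w \<Longrightarrow> take (Suc 0) (drop i w) = [w ! i]"
  by (simp add: Cons_nth_drop_Suc[symmetric])

lemma take2: "Suc i < length w \<Longrightarrow> take 2 (drop i w) = [w ! i, w ! Suc i]"
  by (simp add: Cons_nth_drop_Suc[symmetric] numeral_2_eq_2)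

lemma Con_rr:
  assumes j: "1 \<le> j" "j < length w"
  shows "Con m (rr (length w) j) w = Pj m j w"
proof -
  let ?n = "length w"
  let ?r = "rr ?n j"
  have lr: "length ?r = ?n" using j by (simp add: rr_def)
  have blocks: "map (\<lambda>i. zprod m (take (?r ! (i + 1) - ?r ! i) (drop (?r ! i) w))) [0..<?n - 1]
      = map sg (take (j - 1) w) @ [m (w ! (j - 1)) (w ! j)] @ map sg (drop (j + 1) w)"
  proof (rule nth_equalityI)
    show "length (map (\<lambda>i. zprod m (take (?r ! (i + 1) - ?r ! i) (drop (?r ! i) w))) [0..<?n - 1])
      = length (map sg (take (j - 1) w) @ [m (w ! (j - 1)) (w ! j)] @ map sg (drop (j + 1) w))"
      using j by simp
  next
    fix i assume "i < length (map (\<lambda>i. zprod m (take (?r ! (i + 1) - ?r ! i) (drop (?r ! i) w))) [0..<?n - 1])"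
    then have i: "i < ?n - 1" by simp
    show "map (\<lambda>i. zprod m (take (?r ! (i + 1) - ?r ! i) (drop (?r ! i) w))) [0..<?n - 1] ! i
      = (map sg (take (j - 1) w) @ [m (w ! (j - 1)) (w ! j)] @ map sg (drop (j + 1) w)) ! i"
    proof -
      consider "i < j - 1" | "i = j - 1" | "i > j - 1" by linarith
      then show ?thesis
      proof cases
        case 1
        then have "?r ! i = i" "?r ! (i + 1) = i + 1" using i j by (simp_all add: rr_nth)
        then show ?thesis using 1 i j by (simp add: nth_append take1)
      next
        case 2
        then have "?r ! i = j - 1" "?r ! (i + 1) = j + 1" using i j by (simp_all add: rr_nth)
        moreover have "take 2 (drop (j - 1) w) = [w ! (j - 1), w ! j]"
          using take2[of "j - 1" w] j by simp
        ultimately show ?thesis using 2 i j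
          by (simp add: nth_append zmult_single_left)
      next
        case 3
        then have "?r ! i = i + 1" "?r ! (i + 1) = i + 2" using i j by (simp_all add: rr_nth)
        moreover have "drop (j + 1) w ! (i - j) = w ! (i + 1)" using 3 i j by simp
        ultimately show ?thesis using 3 i j by (simp add: nth_append take1)
      qed
    qed
  qed
  have "Con m ?r w = wprod (map sg (take (j - 1) w) @ [m (w ! (j - 1)) (w ! j)] @ map sg (drop (j + 1) w))"
    unfolding Con_def lr blocks ..
  also have "\<dots> = Pj m j w"
    by (simp add: wprod_append wprod_sg Pj_def liftw_def)
  finally show ?thesis .
qed

lemma C1w_Con: "C1w m w = (\<Sum>r\<in>{r\<in>Rseq (length w). sigma (length w) r = 1}. Con m r w)"
proof -
  have "(\<Sum>r\<in>{r\<in>Rseq (length w). sigma (length w) r = 1}. Con m r w) = (\<Sum>j\<in>{1..<length w}. Con m (rr (length w) j) w)"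
    by (rule sum.reindex_bij_betw[OF rr_bij, symmetric])
  also have "\<dots> = (\<Sum>j\<in>{1..<length w}. Pj m j w)"
    by (rule sum.cong) (auto simp: Con_rr)
  finally show ?thesis by (simp add: C1w_Pj)
qed

theorem corollary3p4:
  fixes m :: "'l \<Rightarrow> 'l \<Rightarrow> ('l \<Rightarrow>\<^sub>0 'r::comm_ring_1)"
  assumes Qalg: "\<And>k::nat. k > 0 \<Longrightarrow> \<exists>u::'r. of_nat k * u = 1"
    and comm: "\<And>a b. m a b = m b a"
    and assoc: "\<And>x y z. zmult m (zmult m x y) z = zmult m x (zmult m y z)"
  shows
    "(\<forall>x. Sop (mult_t m) [:0, 1:] x = expLogS (mult_t m) [:0, 1:] x)
     \<and> (\<forall>x. Sop (mult_tt m) ([:[:0, 1:]:] + [:0, 1:]) x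
            = Sop (mult_tt m) [:[:0, 1:]:] (Sop (mult_tt m) [:0, 1:] x))
     \<and> (\<forall>x. Sop (mult_t m) (- [:0, 1:]) (Sop (mult_t m) [:0, 1:] x) = x
            \<and> Sop (mult_t m) [:0, 1:] (Sop (mult_t m) (- [:0, 1:]) x) = x)
     \<and> (\<forall>n w. length w = n \<longrightarrow>
          coeff_map dt (Sop (mult_t m) [:0, 1:] (wd w))
            = Sop (mult_t m) [:0, 1:] (logS (mult_t m) (wd w))
          \<and> Sop (mult_t m) [:0, 1:] (logS (mult_t m) (wd w))
            = (\<Sum>r\<in>{r\<in>Rseq n. sigma n r = 1}.
                 Sop (mult_t m) [:0, 1:] (coeff_map (\<lambda>c. [:c:]) (Con m r w))))"
proof -
  have q: "qalg TYPE('r)" using Qalg by (simp add: qalg_def)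
  have qP: "qalg TYPE('r poly)" by (rule qalg_poly[OF q])
  have la: "lassoc m"
    unfolding lassoc_def
  proof (intro allI)
    fix a b d
    have e: "zmult m (Poly_Mapping.single x 1) (Poly_Mapping.single y 1) = m x y" for x y
      by (simp add: zmult_single_left)
    show "zmult m (m a b) (Poly_Mapping.single d 1) = zmult m (Poly_Mapping.single a 1) (m b d)"
      using assoc[of "Poly_Mapping.single a 1" "Poly_Mapping.single b 1" "Poly_Mapping.single d 1"]
      by (simp only: e)
  qed
  have laT: "lassoc (mult_t m)" unfolding mult_t_eq by (rule lassoc_mapm[OF rhom_pCons la])
  have laTT: "lassoc (mult_tt m)" unfolding mult_tt_eq by (rule lassoc_mapm[OF rhom_pCons2 la])
  have logT: "logS (mult_t m) = C1 (mult_t m)"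
    by (rule ext, rule logS_C1[OF laT qP])
  have P1: "Sop (mult_t m) [:0, 1:] x = expLogS (mult_t m) [:0, 1:] x" for x
  proof -
    have "expLogS (mult_t m) [:0, 1:] x = lin_ext (\<lambda>w. Eop (mult_t m) [:0, 1:] (length w) (wd w)) x"
      by (simp add: expLogS_def logT Eop_def atLeast0AtMost)
    also have "\<dots> = lin_ext (Sw (mult_t m) [:0, 1:]) x"
      by (rule lin_ext_cong) (simp add: Sw_exp0[OF laT qP])
    finally show ?thesis by (simp add: Sop_def)
  qed
  have P2: "Sop (mult_tt m) ([:[:0, 1:]:] + [:0, 1:]) x
            = Sop (mult_tt m) [:[:0, 1:]:] (Sop (mult_tt m) [:0, 1:] x)" for x
    by (simp add: S_add[OF laTT])
  have P3: "Sop (mult_t m) (- [:0, 1:]) (Sop (mult_t m) [:0, 1:] x) = x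
            \<and> Sop (mult_t m) [:0, 1:] (Sop (mult_t m) (- [:0, 1:]) x) = x" for x
    by (simp add: S_add[OF laT] S_zero)
  have P4: "coeff_map dt (Sop (mult_t m) [:0, 1:] (wd w))
            = Sop (mult_t m) [:0, 1:] (logS (mult_t m) (wd w))
          \<and> Sop (mult_t m) [:0, 1:] (logS (mult_t m) (wd w))
            = (\<Sum>r\<in>{r\<in>Rseq (length w). sigma (length w) r = 1}.
                 Sop (mult_t m) [:0, 1:] (coeff_map (\<lambda>c. [:c:]) (Con m r w)))" for w
  proof
    show "coeff_map dt (Sop (mult_t m) [:0, 1:] (wd w)) = Sop (mult_t m) [:0, 1:] (logS (mult_t m) (wd w))"
      using deriv_part[OF la q, of w] by (simp only: logT)
    have "logS (mult_t m) (wd w) = C1 (mult_t m) (wd w)" by (simp only: logT)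
    also have "\<dots> = coeff_map (\<lambda>c. [:c:]) (C1 m (wd w))"
      using cm_C1[OF rhom_pCons, of m "wd w"] by (simp add: mult_t_eq rhom_pCons)
    also have "\<dots> = (\<Sum>r\<in>{r\<in>Rseq (length w). sigma (length w) r = 1}. coeff_map (\<lambda>c. [:c:]) (Con m r w))"
      by (simp add: C1w_Con[of m w] cm_sum)
    finally show "Sop (mult_t m) [:0, 1:] (logS (mult_t m) (wd w))
            = (\<Sum>r\<in>{r\<in>Rseq (length w). sigma (length w) r = 1}.
                 Sop (mult_t m) [:0, 1:] (coeff_map (\<lambda>c. [:c:]) (Con m r w)))"
      by (simp add: linD_sum)
  qed
  show ?thesis using P1 P2 P3 P4 by blast
qed

end
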